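(* For $\beta>0$ and every positive integer $m$, \[ \mathbb{E}\Big[\sum_{v\in V(G^n_{m,\beta})}\binom{d(v)}{2}\Big]=\left(\frac{2+5\beta}{2\beta}m^2+\frac{2-\beta}{2\beta}m\right)n+O\!\left(n^{2/(2+\beta)}\right)\qquad(n\to\infty), \] where $d(v)$ is the degree of $v$ in $G^n_{m,\beta}$.
   Context: Fix a real $\beta>0$ and a positive integer $m$. The random tree process $(G^n_{1,\beta})_{n\ge1}$ is defined as follows. $G^1_{1,\beta}$ consists of a single vertex $v_1$ and no edges. Given $G^n_{1,\beta}$ with vertices $v_1,\dots,v_n$ and directed edges $e_2,\dots,e_n$ (where $e_i$ is the edge whose tail is $v_i$), $G^{n+1}_{1,\beta}$ is obtained by adding a vertex $v_{n+1}$ and a directed edge $e_{n+1}$ with tail $v_{n+1}$ and head a "target vertex" determined by a random variable $f_{n+1}$, independent of $f_2,\dots,f_n$, taking values in $\Omega_{n+1}=\{(i,v):1\le i\le n\}\cup\{(i,h),(i,t):2\le i\le n\}$ with $\Pr(f_{n+1}=(i,v))=\beta/((2+\beta)n-2)$ and $\Pr(f_{n+1}=(i,h))=\Pr(f_{n+1}=(i,t))=1/((2+\beta)n-2)$. If $f_{n+1}=(i,v)$ the target is $v_i$ (chosen "uniformly"); if $f_{n+1}=(i,h)$ the target is the head of $e_i$, and if $f_{n+1}=(i,t)$ the target is the tail $v_i$ of $e_i$ (chosen "preferentially", by copying the head half-edge, resp. tail half-edge, of $e_i$). Consequently the target is $v_i$ with probability $(d_n(v_i)+\beta)/((2+\beta)n-2)$,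 where $d_n(v)$ is the degree of $v$ in $G^n_{1,\beta}$. Each edge is regarded as two half-edges, one at each endpoint; the degree of a vertex is the number of half-edges at it (loops count twice). For $n\ge1$, $G^n_{m,\beta}$ is the undirected multigraph obtained from $G^{nm}_{1,\beta}$ by identifying, for each $j=1,\dots,n$, the vertices $v_{(j-1)m+1},\dots,v_{jm}$ into a single vertex $w_j$, keeping all edges (so loops and multiple edges may occur). Thus $\sum_v\binom{d(v)}{2}$ equals the number of unordered pairs of distinct half-edges with a common endpoint. *)

theory Defs
  imports "HOL-Probability.Probability" "HOL-Library.Landau_Symbols"
begin

text \<open>A state of the tree process G^n_{1,beta} is the list hs of heads:
  hs ! (k-2) is the (1-based) index of the head of edge e_k, for k = 2..n,
  so length hs = n - 1.  The tail of e_k is v_k.\<close>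

text \<open>One step n -> n+1, with f_{n+1} sampled literally: with probability
  beta*n/((2+beta)n-2) an element (i,v) (uniform over i in 1..n), otherwise
  a uniform element (i,h)/(i,t) with i in 2..n; each element of Omega_{n+1}
  thus gets the prescribed probability.\<close>
definition tree_step :: "real \<Rightarrow> nat list \<Rightarrow> nat list pmf" where
  "tree_step \<beta> hs =
     (let n = length hs + 1 in
      do { b \<leftarrow> bernoulli_pmf (\<beta> * real n / ((2 + \<beta>) * real n - 2));
           t \<leftarrow> (if b then pmf_of_set {1..n}
                 else do { i \<leftarrow> pmf_of_set {2..n};
                           h \<leftarrow> pmf_of_set {True, False};
                           return_pmf (if h then hs ! (i - 2) else i) });
           return_pmf (hs @ [t]) })"

definition tree_process :: "real \<Rightarrow> nat \<Rightarrow> nat list pmf" where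
  "tree_process \<beta> N = ((\<lambda>p. bind_pmf p (tree_step \<beta>)) ^^ (N - 1)) (return_pmf [])"

text \<open>Vertex v_k of G^{nm}_{1,beta} is merged into w_{block m k}.\<close>
definition block :: "nat \<Rightarrow> nat \<Rightarrow> nat" where
  "block m k = (k - 1) div m + 1"

definition merged_degree :: "nat \<Rightarrow> nat list \<Rightarrow> nat \<Rightarrow> nat" where
  "merged_degree m hs j =
     card {k \<in> {2..length hs + 1}. block m k = j}
   + card {k \<in> {2..length hs + 1}. block m (hs ! (k - 2)) = j}"

definition cherries :: "nat \<Rightarrow> nat \<Rightarrow> nat list \<Rightarrow> real" where
  "cherries m n hs = real (\<Sum>j = 1..n. merged_degree m hs j choose 2)"

end

theory Submission
  imports Defs
begin


lemma bernoulli_pmf_1: "bernoulli_pmf 1 = return_pmf True"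
  by (rule pmf_eqI) (auto simp: pmf_bernoulli_True split: split_indicator)

lemma E_bind_fin:
  fixes h :: "'b \<Rightarrow> real"
  assumes "finite (set_pmf p)" "\<And>x. x \<in> set_pmf p \<Longrightarrow> finite (set_pmf (f x))"
  shows "measure_pmf.expectation (p \<bind> f) h = measure_pmf.expectation p (\<lambda>x. measure_pmf.expectation (f x) h)"
proof -
  have "measure_pmf.expectation (p \<bind> f) h = (\<Sum>a\<in>set_pmf p. pmf p a *\<^sub>R measure_pmf.expectation (f a) h)"
    using assms by (intro pmf_expectation_bind) auto
  also have "\<dots> = measure_pmf.expectation p (\<lambda>x. measure_pmf.expectation (f x) h)"
    using assms by (subst integral_measure_pmf[of "set_pmf p"]) auto
  finally show ?thesis .
qed

definition ends :: "nat list \<Rightarrow> nat list" where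
  "ends hs = [2..<length hs + 2] @ hs"

definition Zc :: "real \<Rightarrow> nat \<Rightarrow> real" where
  "Zc \<beta> N = (2 + \<beta>) * real N - 2"

lemma Zc_pos: "\<beta> > 0 \<Longrightarrow> N \<ge> 1 \<Longrightarrow> Zc \<beta> N > 0"
proof -
  assume a: "\<beta> > 0" "N \<ge> 1"
  have "real N \<ge> 1" using a by simp
  then have "(2+\<beta>)*real N \<ge> (2+\<beta>)*1" using a by (intro mult_left_mono) auto
  then have "2 + \<beta> \<le> (2+\<beta>)*real N" by simp
  then show ?thesis unfolding Zc_def using a by linarith
qed

lemma step_N1:
  assumes "\<beta> > 0"
  shows "tree_step \<beta> [] = return_pmf [1]"
proof -
  have p: "\<beta> * real (1::nat) / ((2 + \<beta>) * real (1::nat) - 2) = 1" using assms by simp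
  show ?thesis unfolding tree_step_def Let_def list.size add_0 
    apply (simp only: p bernoulli_pmf_1 bind_return_pmf if_True)
    apply (simp only: atLeastAtMost_singleton pmf_of_set_singleton bind_return_pmf append_Nil)
    done
qed

lemma sum_hs_shift: "(\<Sum>i\<in>{2..length hs + 1}. f (hs ! (i - 2))) = (\<Sum>x\<leftarrow>hs. f x)"
proof -
  have "{2..length hs + 1} = (\<lambda>k. k + 2) ` {..<length hs}" 
  proof (intro equalityI subsetI)
    fix x assume "x \<in> {2..length hs + 1}"
    then show "x \<in> (\<lambda>k. k + 2) ` {..<length hs}" by (intro image_eqI[of _ _ "x-2"]) auto
  qed auto
  have inj: "inj_on (\<lambda>k::nat. k + 2) {..<length hs}" by (simp add: inj_on_def)
  have "(\<Sum>i\<in>{2..length hs + 1}. f (hs ! (i - 2))) = (\<Sum>i\<in>(\<lambda>k. k + 2) ` {..<length hs}. f (hs ! (i - 2)))"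
    by (rule sum.cong[OF \<open>{2..length hs + 1} = _\<close> refl])
  also have "\<dots> = (\<Sum>k<length hs. f (hs ! k))"
    by (subst sum.reindex[OF inj]) simp
  also have "\<dots> = (\<Sum>x\<leftarrow>hs. f x)"
    by (simp add: sum_list_sum_nth atLeast0LessThan)
  finally show ?thesis .
qed

lemma step_E_gen:
  fixes g :: "nat list \<Rightarrow> real"
  assumes b: "\<beta> > 0" and ne: "hs \<noteq> []"
  shows "measure_pmf.expectation (tree_step \<beta> hs) g =
     (\<beta> * (\<Sum>i=1..length hs + 1. g (hs @ [i])) + (\<Sum>x\<leftarrow>ends hs. g (hs @ [x]))) / Zc \<beta> (length hs + 1)"
proof -
  define N where "N = length hs + 1"
  have N2: "N \<ge> 2" using ne unfolding N_def by (cases hs) auto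
  have Z: "Zc \<beta> N > 0" using Zc_pos[OF b] N2 by simp
  define p where "p = \<beta> * real N / ((2 + \<beta>) * real N - 2)"
  have pZ: "p = \<beta> * real N / Zc \<beta> N" unfolding p_def Zc_def ..
  have p0: "0 < p" using b Z N2 unfolding pZ by simp
  have p1: "p < 1" using b Z N2 unfolding pZ Zc_def by (simp add: field_simps)
  define T where "T = (\<lambda>b. if b then pmf_of_set {1..N}
                 else do { i \<leftarrow> pmf_of_set {2..N};
                           h \<leftarrow> pmf_of_set {True, False};
                           return_pmf (if h then hs ! (i - 2) else i) })"
  have ts: "tree_step \<beta> hs = bernoulli_pmf p \<bind> (\<lambda>b. T b \<bind> (\<lambda>t. return_pmf (hs @ [t])))"
    unfolding tree_step_def Let_def T_def p_def N_def ..
  have finT: "finite (set_pmf (T b))" for b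
    using N2 unfolding T_def by auto
  have ET: "measure_pmf.expectation (T b \<bind> (\<lambda>t. return_pmf (hs @ [t]))) g
           = measure_pmf.expectation (T b) (\<lambda>t. g (hs @ [t]))" for b
    by (subst E_bind_fin) (auto simp: finT)
  have E1: "measure_pmf.expectation (T True) (\<lambda>t. g (hs @ [t])) = (\<Sum>i=1..N. g (hs @ [i])) / real N"
    unfolding T_def using N2 by (simp add: integral_pmf_of_set)
  have E2: "measure_pmf.expectation (T False) (\<lambda>t. g (hs @ [t])) = 
      (\<Sum>i=2..N. (g (hs @ [hs ! (i - 2)]) + g (hs @ [i])) / 2) / real (N - 1)"
  proof -
    have "measure_pmf.expectation (T False) (\<lambda>t. g (hs @ [t])) = 
      measure_pmf.expectation (pmf_of_set {2..N}) (\<lambda>i. measure_pmf.expectation (pmf_of_set {True, False} \<bind>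
                (\<lambda>h. return_pmf (if h then hs ! (i - 2) else i))) (\<lambda>t. g (hs @ [t])))"
      unfolding T_def if_False using N2 by (subst E_bind_fin[where p="pmf_of_set {2..N}"]) auto
    also have "\<dots> = measure_pmf.expectation (pmf_of_set {2..N}) (\<lambda>i. (g (hs @ [hs ! (i - 2)]) + g (hs @ [i])) / 2)"
      by (subst E_bind_fin) (auto simp: integral_pmf_of_set)
    also have "\<dots> = (\<Sum>i=2..N. (g (hs @ [hs ! (i - 2)]) + g (hs @ [i])) / 2) / real (N - 1)"
      using N2 by (subst integral_pmf_of_set) (auto simp: Suc_diff_Suc numeral_2_eq_2)
    finally show ?thesis .
  qed
  have "measure_pmf.expectation (tree_step \<beta> hs) g = 
      (\<Sum>i=1..N. g (hs @ [i])) / real N * p + (\<Sum>i=2..N. (g (hs @ [hs ! (i - 2)]) + g (hs @ [i])) / 2) / real (N - 1) * (1 - p)"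
    unfolding ts using p0 p1 by (subst E_bind_fin) (auto simp: finT ET E1 E2)
  also have "(\<Sum>i=2..N. (g (hs @ [hs ! (i - 2)]) + g (hs @ [i])) / 2) = 
         ((\<Sum>x\<leftarrow>hs. g (hs @ [x])) + (\<Sum>i=2..N. g (hs @ [i]))) / 2"
    using sum_hs_shift[of "\<lambda>x. g (hs @ [x])" hs] unfolding N_def
    by (simp add: sum.distrib sum_divide_distrib[symmetric])
  also have "(\<Sum>i=2..N. g (hs @ [i])) = (\<Sum>x\<leftarrow>[2..<length hs + 2]. g (hs @ [x]))"
    unfolding N_def interv_sum_list_conv_sum_set_nat set_upt by (rule sum.cong) auto
  also have "(\<Sum>i=1..N. g (hs @ [i])) / real N * p + ((\<Sum>x\<leftarrow>hs. g (hs @ [x])) + (\<Sum>x\<leftarrow>[2..<length hs + 2]. g (hs @ [x]))) / 2 / real (N - 1) * (1 - p)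
     = (\<beta> * (\<Sum>i=1..N. g (hs @ [i])) + (\<Sum>x\<leftarrow>ends hs. g (hs @ [x]))) / Zc \<beta> N"
  proof -
    have a: "p / real N = \<beta> / Zc \<beta> N" using N2 unfolding pZ by simp
    have omp: "1 - p = 2*(real N - 1)/Zc \<beta> N" using Z unfolding pZ 
      by (simp add: field_simps) (simp add: Zc_def algebra_simps)
    have N1: "real N - 1 > 0" using N2 by simp
    have c: "(1 - p) / 2 / real (N - 1) = 1 / Zc \<beta> N" using N1 N2 unfolding omp
      using Z by (simp add: of_nat_diff field_simps)
    define A where "A = (\<Sum>i=1..N. g (hs @ [i]))"
    define B where "B = (\<Sum>x\<leftarrow>hs. g (hs @ [x]))"
    define C where "C = (\<Sum>x\<leftarrow>[2..<length hs + 2]. g (hs @ [x]))"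
    have e1: "A / real N * p = \<beta> * A / Zc \<beta> N"
      using a by (metis times_divide_eq_left times_divide_eq_right mult.commute)
    have e2: "(B + C) / 2 / real (N - 1) * (1 - p) = (B + C) / Zc \<beta> N"
      using c by (metis times_divide_eq_left times_divide_eq_right mult.commute mult_1 divide_divide_eq_left)
    have e3: "(\<Sum>x\<leftarrow>ends hs. g (hs @ [x])) = C + B" unfolding ends_def B_def C_def by simp
    show ?thesis
      unfolding e3 A_def[symmetric] B_def[symmetric] C_def[symmetric] e1 e2
      by (simp add: add_divide_distrib add.commute)
  qed
  finally show ?thesis unfolding N_def .
qed

lemma step_E:
  fixes g :: "nat list \<Rightarrow> real"
  assumes b: "\<beta> > 0"
  shows "measure_pmf.expectation (tree_step \<beta> hs) g =
     (\<beta> * (\<Sum>i=1..length hs + 1. g (hs @ [i])) + (\<Sum>x\<leftarrow>ends hs. g (hs @ [x]))) / Zc \<beta> (length hs + 1)"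
proof (cases "hs = []")
  case True
  then show ?thesis using b by (simp add: step_N1 ends_def Zc_def)
qed (use step_E_gen[OF b] in auto)

lemma step_E_cong:
  fixes g g' :: "nat list \<Rightarrow> real"
  assumes b: "\<beta> > 0" and "\<And>t. g (hs @ [t]) = g' (hs @ [t])"
  shows "measure_pmf.expectation (tree_step \<beta> hs) g = measure_pmf.expectation (tree_step \<beta> hs) g'"
  using assms by (simp add: step_E)

definition wfh :: "nat list \<Rightarrow> bool" where
  "wfh hs = (\<forall>k<length hs. 1 \<le> hs ! k \<and> hs ! k \<le> k + 1)"

lemma set_step:
  assumes b: "\<beta> > 0" and w: "wfh hs"
  shows "set_pmf (tree_step \<beta> hs) \<subseteq> (\<lambda>t. hs @ [t]) ` {1..length hs + 1}"
proof (cases "hs = []")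
  case True
  then show ?thesis using b by (simp add: step_N1)
next
  case False
  then have N2: "length hs + 1 \<ge> 2" by (cases hs) auto
  show ?thesis unfolding tree_step_def Let_def
  proof (intro subsetI)
    fix x assume "x \<in> set_pmf (bernoulli_pmf (\<beta> * real (length hs + 1) / ((2 + \<beta>) * real (length hs + 1) - 2)) \<bind>
          (\<lambda>b. (if b then pmf_of_set {1..length hs + 1}
                else pmf_of_set {2..length hs + 1} \<bind>
                     (\<lambda>i. pmf_of_set {True, False} \<bind> (\<lambda>h. return_pmf (if h then hs ! (i - 2) else i)))) \<bind>
               (\<lambda>t. return_pmf (hs @ [t]))))"
    then obtain bb t where t: "t \<in> set_pmf (if bb then pmf_of_set {1..length hs + 1}
                else pmf_of_set {2..length hs + 1} \<bind>
                     (\<lambda>i. pmf_of_set {True, False} \<bind> (\<lambda>h. return_pmf (if h then hs ! (i - 2) else i))))"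
        and x: "x = hs @ [t]" by auto
    have "t \<in> {1..length hs + 1}"
    proof (cases bb)
      case True then show ?thesis using t by auto
    next
      case False
      then obtain i where i: "i \<in> {2..length hs + 1}" and "t = hs ! (i - 2) \<or> t = i"
        using t N2 by (auto split: if_splits)
      moreover have "i - 2 < length hs" using i by auto
      moreover have "hs ! (i - 2) \<le> i - 2 + 1" "1 \<le> hs ! (i - 2)" using w \<open>i - 2 < length hs\<close> unfolding wfh_def by auto
      ultimately show ?thesis using i by auto
    qed
    then show "x \<in> (\<lambda>t. hs @ [t]) ` {1..length hs + 1}" using x by auto
  qed
qed

lemma wf_snoc: "wfh hs \<Longrightarrow> t \<in> {1..length hs + 1} \<Longrightarrow> wfh (hs @ [t])"
  unfolding wfh_def by (auto simp: nth_append)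

lemma tp_1: "tree_process \<beta> 1 = return_pmf []"
  by (simp add: tree_process_def)

lemma tp_Suc: "N \<ge> 1 \<Longrightarrow> tree_process \<beta> (Suc N) = tree_process \<beta> N \<bind> tree_step \<beta>"
  unfolding tree_process_def by (cases N) auto

lemma tp_set:
  assumes b: "\<beta> > 0" and N: "N \<ge> 1"
  shows "set_pmf (tree_process \<beta> N) \<subseteq> {hs. length hs = N - 1 \<and> wfh hs}"
  using N
proof (induction N rule: dec_induct)
  case base
  then show ?case by (simp add: tp_1[unfolded One_nat_def] wfh_def)
next
  case (step n)
  show ?case
  proof
    fix x assume "x \<in> set_pmf (tree_process \<beta> (Suc n))"
    then obtain hs where hs: "hs \<in> set_pmf (tree_process \<beta> n)" and x: "x \<in> set_pmf (tree_step \<beta> hs)"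
      using step tp_Suc[of n \<beta>] by auto
    have "length hs = n - 1" "wfh hs" using hs step by auto
    with set_step[OF b] x step(1) show "x \<in> {hs. length hs = Suc n - 1 \<and> wfh hs}"
      by (force intro: wf_snoc)
  qed
qed

lemma tp_fin:
  assumes b: "\<beta> > 0" and N: "N \<ge> 1"
  shows "finite (set_pmf (tree_process \<beta> N))"
proof (rule finite_subset)
  show "set_pmf (tree_process \<beta> N) \<subseteq> {xs. set xs \<subseteq> {0..N} \<and> length xs = N - 1}"
  proof
    fix xs assume "xs \<in> set_pmf (tree_process \<beta> N)"
    then have l: "length xs = N - 1" and w: "wfh xs" using tp_set[OF b N] by auto
    have "xs ! k \<le> N" if "k < length xs" for k
      using w that l unfolding wfh_def by fastforce
    then show "xs \<in> {xs. set xs \<subseteq> {0..N} \<and> length xs = N - 1}"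
      using l by (auto simp: in_set_conv_nth)
  qed
  show "finite {xs. set xs \<subseteq> {0..N} \<and> length xs = N - 1}"
    by (rule finite_lists_length_eq) simp
qed

lemma step_fin:
  assumes b: "\<beta> > 0" and w: "wfh hs"
  shows "finite (set_pmf (tree_step \<beta> hs))"
  using set_step[OF b w] finite_subset by blast

lemma E_rec:
  fixes f :: "nat list \<Rightarrow> real"
  assumes b: "\<beta> > 0" and N: "N \<ge> 1"
  shows "measure_pmf.expectation (tree_process \<beta> (Suc N)) f =
         measure_pmf.expectation (tree_process \<beta> N) (\<lambda>hs. measure_pmf.expectation (tree_step \<beta> hs) f)"
  unfolding tp_Suc[OF N]
  by (rule E_bind_fin) (use tp_fin[OF b N] step_fin[OF b] tp_set[OF b N] in auto)




definition DD :: "nat \<Rightarrow> nat list \<Rightarrow> nat \<Rightarrow> real" where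
  "DD m hs j = (\<Sum>y\<leftarrow>ends hs. of_bool (block m y = j))"

definition QQ :: "nat \<Rightarrow> nat list \<Rightarrow> real" where
  "QQ m hs = (\<Sum>x\<leftarrow>ends hs. DD m hs (block m x))"

lemma sum_ends_snoc:
  fixes f :: "nat \<Rightarrow> real"
  shows "(\<Sum>x\<leftarrow>ends (hs @ [t]). f x) = (\<Sum>x\<leftarrow>ends hs. f x) + f (length hs + 2) + f t"
proof -
  have "[2..<length (hs @ [t]) + 2] = [2..<length hs + 2] @ [length hs + 2]" by simp
  then show ?thesis unfolding ends_def by (simp del: upt_Suc add: ac_simps)
qed

lemma length_ends: "length (ends hs) = 2 * length hs"
  unfolding ends_def length_append length_upt by simp

lemma DD_snoc: "DD m (hs @ [t]) j = DD m hs j + of_bool (block m (length hs + 2) = j) + of_bool (block m t = j)"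
  unfolding DD_def sum_ends_snoc ..

lemma sum_of_bool_sym: "(\<Sum>x\<leftarrow>ends hs. of_bool (block m u = block m x) :: real) = DD m hs (block m u)"
  unfolding DD_def by (intro arg_cong[where f=sum_list] map_cong) auto

lemma QQ_snoc:
  "QQ m (hs @ [t]) = QQ m hs + 2 * DD m hs (block m (length hs + 2)) + 2 * DD m hs (block m t) + 2
      + 2 * of_bool (block m t = block m (length hs + 2))"
proof -
  define u where "u = length hs + 2"
  have "QQ m (hs @ [t]) = (\<Sum>x\<leftarrow>ends hs. DD m (hs @ [t]) (block m x)) + DD m (hs @ [t]) (block m u) + DD m (hs @ [t]) (block m t)"
    unfolding QQ_def sum_ends_snoc u_def ..
  also have "(\<Sum>x\<leftarrow>ends hs. DD m (hs @ [t]) (block m x)) = 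
     QQ m hs + (\<Sum>x\<leftarrow>ends hs. of_bool (block m u = block m x)) + (\<Sum>x\<leftarrow>ends hs. of_bool (block m t = block m x))"
    unfolding DD_snoc QQ_def u_def[symmetric] by (simp add: sum_list_addf)
  also have "DD m (hs @ [t]) (block m u) = DD m hs (block m u) + 1 + of_bool (block m t = block m u)"
    unfolding DD_snoc u_def by simp
  also have "DD m (hs @ [t]) (block m t) = DD m hs (block m t) + of_bool (block m u = block m t) + 1"
    unfolding DD_snoc u_def by simp
  finally show ?thesis unfolding sum_of_bool_sym u_def[symmetric] by (simp add: eq_commute[of "block m u"])
qed

lemma block_iff:
  assumes "m > 0" "i \<ge> 1" "j \<ge> 1"
  shows "block m i = j \<longleftrightarrow> (j - 1) * m < i \<and> i \<le> j * m"
proof -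
  have "block m i = j \<longleftrightarrow> (i - 1) div m = j - 1" unfolding block_def using assms by auto
  also have "\<dots> \<longleftrightarrow> j - 1 \<le> (i - 1) div m \<and> (i - 1) div m < j"
    using assms by auto
  also have "\<dots> \<longleftrightarrow> (j - 1) * m \<le> i - 1 \<and> i - 1 < j * m"
    using assms by (simp add: less_eq_div_iff_mult_less_eq div_less_iff_less_mult)
  also have "\<dots> \<longleftrightarrow> (j - 1) * m < i \<and> i \<le> j * m" using assms by auto
  finally show ?thesis .
qed

lemma block_ge1: "block m i \<ge> 1" unfolding block_def by simp

lemma cnt_card:
  assumes m: "m > 0" and y: "1 \<le> y" "y \<le> N"
  shows "card {i \<in> {1..N}. block m i = block m y} = (if block m y = block m (N + 1) then N mod m else m)"
proof -
  define j where "j = block m y"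
  have j1: "j \<ge> 1" unfolding j_def by (rule block_ge1)
  have S: "{i \<in> {1..N}. block m i = j} = {(j - 1) * m + 1 .. min N (j * m)}"
  proof (intro set_eqI)
    fix i
    show "i \<in> {i \<in> {1..N}. block m i = j} \<longleftrightarrow> i \<in> {(j - 1) * m + 1 .. min N (j * m)}"
    proof (cases "i \<ge> 1")
      case True
      show ?thesis using block_iff[OF m True j1] by auto
    qed auto
  qed
  have yj: "(j - 1) * m < y" "y \<le> j * m" using block_iff[OF m y(1) j1] j_def by auto
  have BN: "block m (N + 1) = N div m + 1" unfolding block_def by simp
  show ?thesis
  proof (cases "j * m \<le> N")
    case True
    have "j * m = (j - 1) * m + m" using j1 by (cases j) auto
    then have "card {i \<in> {1..N}. block m i = j} = m" unfolding S using True by simp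
    moreover have "N div m \<ge> j" using True m by (simp add: less_eq_div_iff_mult_less_eq)
    ultimately show ?thesis unfolding j_def[symmetric] BN by auto
  next
    case False
    have "N div m < j" using False m by (simp add: div_less_iff_less_mult)
    moreover have "j - 1 \<le> N div m" using yj y m by (simp add: less_eq_div_iff_mult_less_eq)
    ultimately have jd: "j = N div m + 1" by auto
    have "card {i \<in> {1..N}. block m i = j} = N - (N div m) * m" unfolding S using False jd by simp
    also have "\<dots> = N mod m" by (simp add: minus_div_mult_eq_mod)
    finally show ?thesis unfolding j_def[symmetric] BN using jd by auto
  qed
qed

lemma sum_of_bool_card: "(\<Sum>i\<in>A. of_bool (P i) :: real) = real (card {i \<in> A. P i})" if "finite A"
proof -
  have "A \<inter> Collect P = {i \<in> A. P i}" by auto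
  then show ?thesis using that by (simp add: of_bool_def sum.If_cases)
qed

lemma cnt_real:
  assumes m: "m > 0" and y: "1 \<le> y" "y \<le> N"
  shows "(\<Sum>i=1..N. of_bool (block m i = block m y) :: real) = real m - (real m - real (N mod m)) * of_bool (block m y = block m (N + 1))"
proof -
  have "(\<Sum>i=1..N. of_bool (block m i = block m y) :: real) = real (card {i \<in> {1..N}. block m i = block m y})"
    by (rule sum_of_bool_card) simp
  then show ?thesis using cnt_card[OF assms] by simp
qed

lemma cntB:
  assumes m: "m > 0"
  shows "(\<Sum>i=1..N. of_bool (block m i = block m (N + 1)) :: real) = real (N mod m)"
proof (cases "N mod m = 0")
  case True
  have "block m i \<noteq> block m (N + 1)" if "i \<in> {1..N}" for i
  proof -
    have "N = (N div m) * m" using True by (metis add_0 mod_div_mult_eq)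
    then have "i - 1 < (N div m) * m" using that by auto
    then have "(i - 1) div m < N div m" by (rule less_mult_imp_div_less)
    then show ?thesis unfolding block_def by simp
  qed
  then show ?thesis using True by simp
next
  case False
  then have "N \<ge> 1" by (cases N) auto
  have e: "block m (N + 1) = block m N" using False unfolding block_def
    by (metis Suc_eq_plus1 \<open>1 \<le> N\<close> add_diff_cancel_right' div_Suc le_add_diff_inverse2)
  have c: "card {i \<in> {1..N}. block m i = block m N} = N mod m" using cnt_card[OF m, of N N] e \<open>1 \<le> N\<close> by simp
  have "(\<Sum>i=1..N. of_bool (block m i = block m (N + 1)) :: real) = real (card {i \<in> {1..N}. block m i = block m (N + 1)})"
    by (rule sum_of_bool_card) simp
  then show ?thesis unfolding e c .
qed




lemma sum_list_sum_swap:
  fixes f :: "'a \<Rightarrow> 'b \<Rightarrow> real"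
  shows "(\<Sum>x\<leftarrow>xs. \<Sum>i\<in>A. f x i) = (\<Sum>i\<in>A. \<Sum>x\<leftarrow>xs. f x i)"
  by (induction xs) (simp_all add: sum.distrib)

lemma sum_list_lin:
  fixes f :: "'a \<Rightarrow> real"
  shows "(\<Sum>y\<leftarrow>xs. a - b * f y) = a * length xs - b * (\<Sum>y\<leftarrow>xs. f y)"
  by (induction xs) (simp_all add: algebra_simps)

lemma sum_list_cong_set:
  fixes f g :: "'a \<Rightarrow> real"
  shows "(\<And>y. y \<in> set xs \<Longrightarrow> f y = g y) \<Longrightarrow> (\<Sum>y\<leftarrow>xs. f y) = (\<Sum>y\<leftarrow>xs. g y)"
  by (intro arg_cong[where f=sum_list] map_cong) auto

lemma ends_range: "wfh hs \<Longrightarrow> y \<in> set (ends hs) \<Longrightarrow> 1 \<le> y \<and> y \<le> length hs + 1"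
  unfolding ends_def wfh_def by (fastforce simp: in_set_conv_nth)

lemma step_QQ:
  assumes b: "\<beta> > 0" and m: "m > 0" and w: "wfh hs"
  defines "N \<equiv> length hs + 1"
  defines "Z \<equiv> Zc \<beta> (length hs + 1)"
  defines "B \<equiv> block m (length hs + 2)"
  defines "r \<equiv> real (N mod m)"
  shows "measure_pmf.expectation (tree_step \<beta> hs) (QQ m) =
     QQ m hs * (1 + 2 / Z) + 2 * DD m hs B + 2
       + (2 / Z) * (2 * \<beta> * real m * (real N - 1) + \<beta> * r + (1 - \<beta> * (real m - r)) * DD m hs B)"
proof -
  define Q where "Q = QQ m hs"
  define D where "D = DD m hs B"
  have Z: "Z > 0" unfolding Z_def using Zc_pos[OF b] by simp
  have ZN: "Z = \<beta> * N + 2 * (N - 1)" unfolding Z_def Zc_def N_def by (simp add: algebra_simps)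
  have BN: "B = block m (N + 1)" unfolding B_def N_def by simp
  have snoc: "QQ m (hs @ [t]) = Q + 2 * D + 2 + 2 * DD m hs (block m t) + 2 * of_bool (block m t = B)" for t
    unfolding QQ_snoc Q_def D_def B_def by simp
  have s1: "(\<Sum>i=1..N. DD m hs (block m i)) = 2 * (real N - 1) * real m - (real m - r) * D"
  proof -
    have "(\<Sum>i=1..N. DD m hs (block m i)) = (\<Sum>y\<leftarrow>ends hs. \<Sum>i=1..N. of_bool (block m i = block m y))"
    proof -
      have "(\<Sum>i=1..N. DD m hs (block m i)) = (\<Sum>i=1..N. \<Sum>y\<leftarrow>ends hs. of_bool (block m i = block m y))"
        unfolding DD_def by (intro sum.cong refl sum_list_cong_set) auto
      then show ?thesis unfolding sum_list_sum_swap .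
    qed
    also have "\<dots> = (\<Sum>y\<leftarrow>ends hs. real m - (real m - r) * of_bool (block m y = B))"
      using ends_range[OF w] unfolding BN r_def N_def
      by (intro sum_list_cong_set cnt_real[OF m]) auto
    also have "\<dots> = 2 * (real N - 1) * real m - (real m - r) * D"
      unfolding sum_list_lin D_def DD_def length_ends N_def by simp
    finally show ?thesis .
  qed
  have s2: "(\<Sum>i=1..N. of_bool (block m i = B) :: real) = r"
    unfolding BN r_def using cntB[OF m] by simp
  have s3: "(\<Sum>x\<leftarrow>ends hs. DD m hs (block m x)) = Q" unfolding Q_def QQ_def ..
  have s4: "(\<Sum>x\<leftarrow>ends hs. of_bool (block m x = B) :: real) = D" unfolding D_def DD_def ..
  have "measure_pmf.expectation (tree_step \<beta> hs) (QQ m) = 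
     (\<beta> * (\<Sum>i=1..N. QQ m (hs @ [i])) + (\<Sum>x\<leftarrow>ends hs. QQ m (hs @ [x]))) / Z"
    unfolding step_E[OF b] N_def Z_def ..
  also have "(\<Sum>i=1..N. QQ m (hs @ [i])) = real N * (Q + 2 * D + 2) + 2 * (\<Sum>i=1..N. DD m hs (block m i)) + 2 * (\<Sum>i=1..N. of_bool (block m i = B))"
    unfolding snoc by (simp add: sum.distrib sum_distrib_left)
  also have "(\<Sum>x\<leftarrow>ends hs. QQ m (hs @ [x])) = 2 * (real N - 1) * (Q + 2 * D + 2) + 2 * Q + 2 * D"
    unfolding snoc sum_list_addf sum_list_const_mult s3 s4 by (simp add: length_ends N_def sum_list_triv algebra_simps)
  finally have E: "measure_pmf.expectation (tree_step \<beta> hs) (QQ m) = (\<beta> * (real N * (Q + 2 * D + 2) + 2 * (2 * (real N - 1) * real m - (real m - r) * D) + 2 * r) + (2 * (real N - 1) * (Q + 2 * D + 2) + 2 * Q + 2 * D)) / Z"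
    unfolding s1 s2 .
  have L: "real (N - 1) = real N - 1" unfolding N_def by simp
  have ZN': "Z = \<beta> * N + 2 * (real N - 1)" using ZN L by simp
  have "(\<beta> * (real N * (Q + 2 * D + 2) + 2 * (2 * (real N - 1) * real m - (real m - r) * D) + 2 * r) + (2 * (real N - 1) * (Q + 2 * D + 2) + 2 * Q + 2 * D)) / Z
     = Q * (1 + 2 / Z) + 2 * D + 2 + (2 / Z) * (2 * \<beta> * real m * (real N - 1) + \<beta> * r + (1 - \<beta> * (real m - r)) * D)"
  proof -
    define W where "W = 2 * \<beta> * real m * (real N - 1) + \<beta> * r + (1 - \<beta> * (real m - r)) * D"
    have r1: "Q * (1 + 2 / Z) + 2 * D + 2 + (2 / Z) * W = (Q*Z + 2*Q + (2*D+2)*Z + 2*W)/Z"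
      using Z by (simp add: field_simps)
    have r2: "\<beta> * (real N * (Q + 2 * D + 2) + 2 * (2 * (real N - 1) * real m - (real m - r) * D) + 2 * r) + (2 * (real N - 1) * (Q + 2 * D + 2) + 2 * Q + 2 * D)
       = Q*Z + 2*Q + (2*D+2)*Z + 2*W"
      unfolding ZN' W_def by (simp add: algebra_simps)
    show ?thesis unfolding r2 W_def[symmetric] r1 ..
  qed
  then show ?thesis unfolding E Q_def D_def .
qed

definition II :: "nat \<Rightarrow> nat list \<Rightarrow> real" where
  "II m hs = (\<Sum>x\<leftarrow>hs. of_bool (block m x = block m (length hs + 2)))"

lemma DD_B:
  assumes m: "m > 0" and Nm: "length hs + 1 \<ge> m"
  shows "DD m hs (block m (length hs + 2)) = real ((length hs + 1) mod m) + II m hs"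
proof -
  define N where "N = length hs + 1"
  define B where "B = block m (N + 1)"
  have B2: "B \<ge> 2" unfolding B_def block_def using Nm m N_def
    by (simp add: Suc_le_eq div_greater_zero_iff)
  have b1: "block m 1 = 1" unfolding block_def by simp
  have "(\<Sum>y\<leftarrow>[2..<length hs + 2]. of_bool (block m y = B) :: real) = (\<Sum>i\<in>{2..<length hs + 2}. of_bool (block m i = B))"
    by (simp only: interv_sum_list_conv_sum_set_nat set_upt)
  also have "\<dots> = (\<Sum>i\<in>{1..N}. of_bool (block m i = B))"
  proof -
    have "{1..N} = insert 1 {2..<length hs + 2}" unfolding N_def by auto
    then show ?thesis using B2 b1 by (simp only:) (subst sum.insert; simp)
  qed
  also have "\<dots> = real (N mod m)" unfolding B_def by (rule cntB[OF m])
  finally have "(\<Sum>y\<leftarrow>[2..<length hs + 2]. of_bool (block m y = B) :: real) = real (N mod m)" .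
  then show ?thesis unfolding DD_def II_def ends_def B_def N_def by simp
qed

lemma E_cong:
  fixes f g :: "'a \<Rightarrow> real"
  shows "(\<And>x. x \<in> set_pmf p \<Longrightarrow> f x = g x) \<Longrightarrow> measure_pmf.expectation p f = measure_pmf.expectation p g"
  by (rule integral_cong_AE) (auto simp: AE_measure_pmf_iff)

lemma E_lin:
  fixes f g :: "'a \<Rightarrow> real"
  assumes "finite (set_pmf p)"
  shows "measure_pmf.expectation p (\<lambda>x. f x * a + g x * b + c) = measure_pmf.expectation p f * a + measure_pmf.expectation p g * b + c"
proof -
  have i: "integrable (measure_pmf p) h" for h :: "'a \<Rightarrow> real" using assms by (rule integrable_measure_pmf_finite)
  show ?thesis by (simp add: i)
qed

lemma X_rec:
  assumes b: "\<beta> > 0" and m: "m > 0" and N: "N \<ge> 1" "N \<ge> m"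
  defines "X \<equiv> \<lambda>N. measure_pmf.expectation (tree_process \<beta> N) (QQ m)"
  defines "J \<equiv> \<lambda>N. measure_pmf.expectation (tree_process \<beta> N) (II m)"
  defines "r \<equiv> real (N mod m)"
  defines "Z \<equiv> Zc \<beta> N"
  shows "X (Suc N) = X N * (1 + 2 / Z) + 2 * (r + J N) + 2
          + (2 / Z) * (2 * \<beta> * real m * (real N - 1) + \<beta> * r + (1 - \<beta> * (real m - r)) * (r + J N))"
proof -
  have "X (Suc N) = measure_pmf.expectation (tree_process \<beta> N) (\<lambda>hs. measure_pmf.expectation (tree_step \<beta> hs) (QQ m))"
    unfolding X_def by (rule E_rec[OF b N(1)])
  also have "\<dots> = measure_pmf.expectation (tree_process \<beta> N) (\<lambda>hs. QQ m hs * (1 + 2 / Z) + II m hs * (2 + (2 / Z) * (1 - \<beta> * (real m - r)))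
        + (2 * r + 2 + (2 / Z) * (2 * \<beta> * real m * (real N - 1) + \<beta> * r + (1 - \<beta> * (real m - r)) * r)))"
  proof (rule E_cong)
    fix hs assume "hs \<in> set_pmf (tree_process \<beta> N)"
    then have l: "length hs = N - 1" and w: "wfh hs" using tp_set[OF b N(1)] by auto
    have l1: "length hs + 1 = N" using l N by simp
    show "measure_pmf.expectation (tree_step \<beta> hs) (QQ m) = QQ m hs * (1 + 2 / Z) + II m hs * (2 + (2 / Z) * (1 - \<beta> * (real m - r)))
        + (2 * r + 2 + (2 / Z) * (2 * \<beta> * real m * (real N - 1) + \<beta> * r + (1 - \<beta> * (real m - r)) * r))"
      unfolding step_QQ[OF b m w] l1 DD_B[OF m, of hs, unfolded l1, OF N(2)] r_def[symmetric] Z_def[symmetric]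
      by (simp add: algebra_simps add_divide_distrib)
  qed
  also have "\<dots> = X N * (1 + 2 / Z) + J N * (2 + (2 / Z) * (1 - \<beta> * (real m - r)))
        + (2 * r + 2 + (2 / Z) * (2 * \<beta> * real m * (real N - 1) + \<beta> * r + (1 - \<beta> * (real m - r)) * r))"
    unfolding X_def J_def by (rule E_lin[OF tp_fin[OF b N(1)]])
  finally show ?thesis by (simp add: algebra_simps add_divide_distrib)
qed




lemma E_const: "measure_pmf.expectation p (\<lambda>_. c) = (c::real)"
  by (simp add: lebesgue_integral_const measure_pmf.prob_space)

lemma E_prefix:
  fixes g :: "nat list \<Rightarrow> real"
  assumes b: "\<beta> > 0" and N: "N \<ge> 1"
  shows "measure_pmf.expectation (tree_process \<beta> (N + M)) (\<lambda>hs. g (take (N - 1) hs)) = measure_pmf.expectation (tree_process \<beta> N) g"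
proof (induction M)
  case 0
  show ?case unfolding add_0_right
    by (rule E_cong) (use tp_set[OF b N] in auto)
next
  case (Suc M)
  have "measure_pmf.expectation (tree_process \<beta> (N + Suc M)) (\<lambda>hs. g (take (N - 1) hs))
     = measure_pmf.expectation (tree_process \<beta> (N + M)) (\<lambda>hs. measure_pmf.expectation (tree_step \<beta> hs) (\<lambda>hs. g (take (N - 1) hs)))"
    using E_rec[OF b, of "N + M"] N by simp
  also have "\<dots> = measure_pmf.expectation (tree_process \<beta> (N + M)) (\<lambda>hs. g (take (N - 1) hs))"
  proof (rule E_cong)
    fix hs assume "hs \<in> set_pmf (tree_process \<beta> (N + M))"
    then have l: "length hs = N + M - 1" using tp_set[OF b, of "N + M"] N by auto
    have "measure_pmf.expectation (tree_step \<beta> hs) (\<lambda>hs. g (take (N - 1) hs)) = measure_pmf.expectation (tree_step \<beta> hs) (\<lambda>_. g (take (N - 1) hs))"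
      by (rule step_E_cong[OF b]) (use l in simp)
    then show "measure_pmf.expectation (tree_step \<beta> hs) (\<lambda>hs. g (take (N - 1) hs)) = g (take (N - 1) hs)" by (simp add: E_const)
  qed
  finally show ?case using Suc by simp
qed

lemma E_le_const:
  fixes f :: "'a \<Rightarrow> real"
  assumes "finite (set_pmf p)" "\<And>x. x \<in> set_pmf p \<Longrightarrow> f x \<le> c"
  shows "measure_pmf.expectation p f \<le> c"
  by (rule measure_pmf.integral_le_const) (use assms in \<open>auto simp: AE_measure_pmf_iff integrable_measure_pmf_finite\<close>)

lemma card_filter_le:
  assumes "{i \<in> A. P i} \<subseteq> S" "finite S" "finite A"
  shows "(\<Sum>i\<in>A. of_bool (P i) :: real) \<le> real (card S)"
proof -
  have "(\<Sum>i\<in>A. of_bool (P i) :: real) = real (card {i\<in>A. P i})" by (rule sum_of_bool_card) fact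
  also have "\<dots> \<le> real (card S)" using assms by (simp add: card_mono)
  finally show ?thesis .
qed

lemma A_step_bound:
  assumes b: "\<beta> > 0" and m: "m > 0" and w: "wfh h" and l: "length h = k"
  shows "measure_pmf.expectation (tree_step \<beta> h) (\<lambda>h. of_bool (k + 2 \<le> h ! k + m)) \<le> (\<beta> + 2) * real m / Zc \<beta> (k + 1)"
proof -
  have Z: "Zc \<beta> (k + 1) > 0" using Zc_pos[OF b] by simp
  have s1: "(\<Sum>i=1..k+1. of_bool (k + 2 \<le> i + m) :: real) \<le> real m"
  proof -
    have "(\<Sum>i=1..k+1. of_bool (k + 2 \<le> i + m) :: real) \<le> real (card {k + 2 - m .. k + 1})"
      by (rule card_filter_le) auto
    also have "\<dots> \<le> real m" by simp
    finally show ?thesis .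
  qed
  have s2: "(\<Sum>x\<leftarrow>[2..<k+2]. of_bool (k + 2 \<le> x + m) :: real) \<le> real m"
  proof -
    have "(\<Sum>x\<leftarrow>[2..<k+2]. of_bool (k + 2 \<le> x + m) :: real) = (\<Sum>x\<in>{2..<k+2}. of_bool (k + 2 \<le> x + m))"
      by (simp only: interv_sum_list_conv_sum_set_nat set_upt)
    also have "\<dots> \<le> real (card {k + 2 - m ..< k + 2})"
      by (rule card_filter_le) auto
    also have "\<dots> \<le> real m" by simp
    finally show ?thesis .
  qed
  have s3: "(\<Sum>x\<leftarrow>h. of_bool (k + 2 \<le> x + m) :: real) \<le> real m"
  proof -
    have "(\<Sum>x\<leftarrow>h. of_bool (k + 2 \<le> x + m) :: real) = (\<Sum>j<k. of_bool (k + 2 \<le> h ! j + m))"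
      using l by (simp add: sum_list_sum_nth atLeast0LessThan)
    also have "\<dots> \<le> (\<Sum>j<k. of_bool (k + 2 \<le> j + 1 + m))"
    proof (rule sum_mono)
      fix j assume "j \<in> {..<k}"
      then have "h ! j \<le> j + 1" using w l unfolding wfh_def by auto
      then show "(of_bool (k + 2 \<le> h ! j + m) :: real) \<le> of_bool (k + 2 \<le> j + 1 + m)" by auto
    qed
    also have "\<dots> \<le> real (card {k + 1 - m ..< k})"
      by (rule card_filter_le) auto
    also have "\<dots> \<le> real m" by simp
    finally show ?thesis .
  qed
  have "measure_pmf.expectation (tree_step \<beta> h) (\<lambda>h. of_bool (k + 2 \<le> h ! k + m))
     = (\<beta> * (\<Sum>i=1..k+1. of_bool (k + 2 \<le> i + m)) + ((\<Sum>x\<leftarrow>[2..<k+2]. of_bool (k + 2 \<le> x + m)) + (\<Sum>x\<leftarrow>h. of_bool (k + 2 \<le> x + m)))) / Zc \<beta> (k + 1)"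
    unfolding step_E[OF b] l ends_def by (simp add: nth_append l)
  also have "\<dots> \<le> (\<beta> * real m + (real m + real m)) / Zc \<beta> (k + 1)"
    using s1 s2 s3 Z b by (intro divide_right_mono add_mono mult_left_mono) auto
  also have "\<dots> = (\<beta> + 2) * real m / Zc \<beta> (k + 1)" by (simp add: algebra_simps)
  finally show ?thesis .
qed

lemma A_bound:
  assumes b: "\<beta> > 0" and m: "m > 0" and kN: "k + 2 \<le> N"
  shows "measure_pmf.expectation (tree_process \<beta> N) (\<lambda>h. of_bool (k + 2 \<le> h ! k + m)) \<le> (\<beta> + 2) * real m / Zc \<beta> (k + 1)"
proof -
  have eqN: "(k + 2) + (N - (k + 2)) = N" using kN by simp
  have "measure_pmf.expectation (tree_process \<beta> N) (\<lambda>h. of_bool (k + 2 \<le> h ! k + m) :: real)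
      = measure_pmf.expectation (tree_process \<beta> N) (\<lambda>h. of_bool (k + 2 \<le> take (k + 2 - 1) h ! k + m))"
    by (rule E_cong) simp
  also have "\<dots> = measure_pmf.expectation (tree_process \<beta> ((k + 2) + (N - (k + 2)))) (\<lambda>h. of_bool (k + 2 \<le> take (k + 2 - 1) h ! k + m))"
    unfolding eqN ..
  also have "\<dots> = measure_pmf.expectation (tree_process \<beta> (k + 2)) (\<lambda>h. of_bool (k + 2 \<le> h ! k + m))"
    by (rule E_prefix[OF b]) simp
  also have "\<dots> = measure_pmf.expectation (tree_process \<beta> (k + 1)) (\<lambda>hs. measure_pmf.expectation (tree_step \<beta> hs) (\<lambda>h. of_bool (k + 2 \<le> h ! k + m)))"
    using E_rec[OF b, of "k + 1"] by simp
  also have "\<dots> \<le> (\<beta> + 2) * real m / Zc \<beta> (k + 1)"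
  proof (rule E_le_const[OF tp_fin[OF b]])
    fix hs assume "hs \<in> set_pmf (tree_process \<beta> (k + 1))"
    then have "length hs = k" "wfh hs" using tp_set[OF b, of "k + 1"] by auto
    then show "measure_pmf.expectation (tree_step \<beta> hs) (\<lambda>h. of_bool (k + 2 \<le> h ! k + m)) \<le> (\<beta> + 2) * real m / Zc \<beta> (k + 1)"
      by (intro A_step_bound[OF b m])
  qed simp
  finally show ?thesis .
qed

lemma E_mono:
  fixes f g :: "'a \<Rightarrow> real"
  assumes "finite (set_pmf p)" "\<And>x. x \<in> set_pmf p \<Longrightarrow> f x \<le> g x"
  shows "measure_pmf.expectation p f \<le> measure_pmf.expectation p g"
  by (rule integral_mono_AE) (use assms in \<open>auto simp: AE_measure_pmf_iff integrable_measure_pmf_finite\<close>)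

lemma E_nonneg:
  fixes f :: "'a \<Rightarrow> real"
  assumes "\<And>x. x \<in> set_pmf p \<Longrightarrow> 0 \<le> f x"
  shows "0 \<le> measure_pmf.expectation p f"
  by (rule integral_nonneg_AE) (use assms in \<open>auto simp: AE_measure_pmf_iff\<close>)

lemma E_sum:
  fixes f :: "nat \<Rightarrow> 'a \<Rightarrow> real"
  assumes "finite (set_pmf p)"
  shows "measure_pmf.expectation p (\<lambda>x. \<Sum>k\<in>K. c k * f k x) = (\<Sum>k\<in>K. c k * measure_pmf.expectation p (f k))"
  by (subst Bochner_Integration.integral_sum) (use assms in \<open>auto simp: integrable_measure_pmf_finite\<close>)

lemma II_le:
  assumes m: "m > 0" and w: "wfh hs" and l: "length hs = L"
  shows "II m hs \<le> (\<Sum>k<L. of_bool (L + 1 \<le> k + m) * of_bool (k + 2 \<le> hs ! k + m))"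
proof -
  have "II m hs = (\<Sum>k<L. of_bool (block m (hs ! k) = block m (L + 2)))"
    unfolding II_def using l by (simp add: sum_list_sum_nth atLeast0LessThan)
  also have "\<dots> \<le> (\<Sum>k<L. of_bool (L + 1 \<le> k + m) * of_bool (k + 2 \<le> hs ! k + m))"
  proof (rule sum_mono)
    fix k assume k: "k \<in> {..<L}"
    have h1: "1 \<le> hs ! k" "hs ! k \<le> k + 1" using w k l unfolding wfh_def by auto
    show "(of_bool (block m (hs ! k) = block m (L + 2)) :: real) \<le> of_bool (L + 1 \<le> k + m) * of_bool (k + 2 \<le> hs ! k + m)"
    proof (cases "block m (hs ! k) = block m (L + 2)")
      case True
      have "(block m (L + 2) - 1) * m < hs ! k"
        using block_iff[OF m h1(1) block_ge1] True by auto
      moreover have "block m (L + 2) - 1 = (L + 1) div m" unfolding block_def by simp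
      ultimately have a: "(L + 1) div m * m < hs ! k" by simp
      have "L + 1 < (L + 1) div m * m + m" using m
        by (metis add_less_cancel_left div_mult_mod_eq mod_less_divisor)
      then have "L + 1 < hs ! k + m" using a by linarith
      then show ?thesis using True h1 k by auto
    qed auto
  qed
  finally show ?thesis .
qed

lemma J_bound:
  assumes b: "\<beta> > 0" and m: "m > 0" and N: "N \<ge> 2 * m" "N \<ge> 2"
  shows "0 \<le> measure_pmf.expectation (tree_process \<beta> N) (II m)"
    and "measure_pmf.expectation (tree_process \<beta> N) (II m) \<le> (\<beta> + 2) * real m ^ 2 / real N"
proof -
  have N1: "N \<ge> 1" using N by simp
  note fin = tp_fin[OF b N1]
  show "0 \<le> measure_pmf.expectation (tree_process \<beta> N) (II m)"
    by (rule E_nonneg) (auto simp: II_def intro!: sum_list_nonneg)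
  define c where "c = (\<lambda>k. of_bool (N - 1 + 1 \<le> k + m) :: real)"
  have "measure_pmf.expectation (tree_process \<beta> N) (II m) \<le> 
     measure_pmf.expectation (tree_process \<beta> N) (\<lambda>hs. \<Sum>k<N-1. c k * of_bool (k + 2 \<le> hs ! k + m))"
  proof (rule E_mono[OF fin])
    fix hs assume "hs \<in> set_pmf (tree_process \<beta> N)"
    then have l: "length hs = N - 1" and w: "wfh hs" using tp_set[OF b N1] by auto
    show "II m hs \<le> (\<Sum>k<N-1. c k * of_bool (k + 2 \<le> hs ! k + m))"
      unfolding c_def by (rule II_le[OF m w l])
  qed
  also have "\<dots> = (\<Sum>k<N-1. c k * measure_pmf.expectation (tree_process \<beta> N) (\<lambda>hs. of_bool (k + 2 \<le> hs ! k + m)))"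
    by (rule E_sum[OF fin])
  also have "\<dots> \<le> (\<Sum>k<N-1. c k * ((\<beta> + 2) * real m / real N))"
  proof (rule sum_mono)
    fix k assume k: "k \<in> {..<N-1}"
    show "c k * measure_pmf.expectation (tree_process \<beta> N) (\<lambda>hs. of_bool (k + 2 \<le> hs ! k + m)) \<le> c k * ((\<beta> + 2) * real m / real N)"
    proof (cases "N \<le> k + m")
      case True
      have "measure_pmf.expectation (tree_process \<beta> N) (\<lambda>hs. of_bool (k + 2 \<le> hs ! k + m)) \<le> (\<beta> + 2) * real m / Zc \<beta> (k + 1)"
        using k by (intro A_bound[OF b m]) auto
      also have "\<dots> \<le> (\<beta> + 2) * real m / real N"
      proof (rule divide_left_mono)
        have "real N \<le> 2 * real k" using True N by linarith
        also have "2 * real k \<le> Zc \<beta> (k + 1)" unfolding Zc_def using b by (simp add: algebra_simps)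
        finally show "real N \<le> Zc \<beta> (k + 1)" .
        show "0 \<le> (\<beta> + 2) * real m" using b by simp
        show "0 < Zc \<beta> (k + 1) * real N" using Zc_pos[OF b, of "k+1"] N by simp
      qed
      finally show ?thesis unfolding c_def using True N by simp
    qed (simp add: c_def)
  qed
  also have "\<dots> = (\<Sum>k<N-1. c k) * ((\<beta> + 2) * real m / real N)" by (rule sum_distrib_right[symmetric])
  also have "\<dots> \<le> real m * ((\<beta> + 2) * real m / real N)"
  proof (rule mult_right_mono)
    have "(\<Sum>k<N-1. c k) \<le> real (card {N - m ..< N - 1})"
      unfolding c_def by (rule card_filter_le) auto
    also have "\<dots> \<le> real m" by simp
    finally show "(\<Sum>k<N-1. c k) \<le> real m" .
    show "0 \<le> (\<beta> + 2) * real m / real N" using b by simp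
  qed
  also have "\<dots> = (\<beta> + 2) * real m ^ 2 / real N" by (simp add: power2_eq_square)
  finally show "measure_pmf.expectation (tree_process \<beta> N) (II m) \<le> (\<beta> + 2) * real m ^ 2 / real N" .
qed




definition hh :: "real \<Rightarrow> nat \<Rightarrow> real" where
  "hh a N = fact (N - 1) / pochhammer (1 - a) (N - 1)"

lemma hh_pos: "a < 1 \<Longrightarrow> hh a N > 0"
  unfolding hh_def by (intro divide_pos_pos pochhammer_pos) auto

lemma one_plus_Zc:
  assumes b: "\<beta> > 0" and N: "N \<ge> 1"
  shows "1 + 2 / Zc \<beta> N = real N / (real N - 2 / (2 + \<beta>))"
proof -
  have Z: "Zc \<beta> N > 0" using Zc_pos[OF b N] .
  have nz: "2 + \<beta> \<noteq> 0" using b by simp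
  have t: "(2 + \<beta>) * (2 / (2 + \<beta>)) = 2" using nz by (metis nonzero_mult_div_cancel_left times_divide_eq_right)
  have e: "Zc \<beta> N = (2 + \<beta>) * (real N - 2 / (2 + \<beta>))" unfolding Zc_def right_diff_distrib t ..
  have p: "real N - 2 / (2 + \<beta>) > 0" using Z b unfolding e by (simp add: zero_less_mult_iff)
  define d where "d = real N - 2 / (2 + \<beta>)"
  have d0: "d > 0" using p unfolding d_def .
  have pos: "(2 + \<beta>) * d > 0" using d0 b by simp
  have "1 + 2 / ((2 + \<beta>) * d) = ((2 + \<beta>) * d + 2) / ((2 + \<beta>) * d)"
    using pos nz d0 by (simp add: add_divide_distrib)
  also have "(2 + \<beta>) * d + 2 = (2 + \<beta>) * real N" unfolding d_def right_diff_distrib t by simp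
  also have "(2 + \<beta>) * real N / ((2 + \<beta>) * d) = real N / d" using nz by simp
  finally show ?thesis unfolding e d_def .
qed

lemma hh_Suc:
  assumes b: "\<beta> > 0" and N: "N \<ge> 1"
  shows "hh (2 / (2 + \<beta>)) (Suc N) = hh (2 / (2 + \<beta>)) N * (1 + 2 / Zc \<beta> N)"
proof -
  define a where "a = 2 / (2 + \<beta>)"
  have a1: "a < 1" unfolding a_def using b by simp
  have Z: "Zc \<beta> N > 0" using Zc_pos[OF b N] .
  have p: "real N - a > 0" using one_plus_Zc[OF b N] Z b a1 N unfolding a_def by linarith
  have poch: "pochhammer (1 - a) N = pochhammer (1 - a) (N - 1) * (real N - a)"
    using N pochhammer_Suc[of "1 - a" "N - 1"] by (simp add: of_nat_diff)
  have f: "fact N = fact (N - 1) * (real N :: real)"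
    using N by (metis fact_Suc Suc_pred' less_le_trans mult.commute of_nat_mult zero_less_one)
  have pp: "pochhammer (1 - a) (N - 1) > 0" using a1 by (intro pochhammer_pos) auto
  show ?thesis unfolding a_def[symmetric] one_plus_Zc[OF b N, folded a_def] hh_def
    using poch f p pp by simp
qed

lemma hh_bound:
  assumes a0: "0 < a" and a1: "a < 1"
  shows "\<exists>C. \<forall>N\<ge>1. hh a N \<le> C * real N powr a"
proof -
  define z where "z = 1 - a"
  have z0: "z > 0" unfolding z_def using a1 by simp
  have "Bseq (Gamma_series' z)" using Gamma_series'_LIMSEQ[of z] by (intro convergent_imp_Bseq convergentI)
  then obtain K where K: "\<forall>n. norm (Gamma_series' z n) \<le> K" by (rule BseqE)
  show ?thesis
  proof (intro exI allI impI)
    fix N :: nat assume N: "N \<ge> 1"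
    have pz: "pochhammer z N = pochhammer z (N - 1) * (real N - a)"
      using N pochhammer_Suc[of z "N - 1"] unfolding z_def by (simp add: of_nat_diff)
    have pp: "pochhammer z (N - 1) > 0" using z0 by (intro pochhammer_pos) auto
    have Na: "real N - a > 0" using N a1 by simp
    have ex: "exp (z * ln (real N)) = real N powr z" using N by (simp add: powr_def)
    have G: "Gamma_series' z N = fact (N - 1) * real N powr z / pochhammer z N"
      unfolding Gamma_series'_def using ex by simp
    have "hh a N = Gamma_series' z N * (real N - a) / real N powr z"
      unfolding hh_def G z_def[symmetric] pz using Na pp N by (simp add: field_simps)
    also have "\<dots> \<le> K * real N / real N powr z"
    proof (intro divide_right_mono mult_mono)
      show "Gamma_series' z N \<le> K" using K[rule_format, of N] by simp
      show "real N - a \<le> real N" using a0 by simp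
      show "0 \<le> K" using K[rule_format, of N] by (meson norm_ge_zero order.trans)
      show "0 \<le> real N - a" using Na by simp
    qed simp
    also have "K * real N / real N powr z = K * real N powr a"
    proof -
      have "real N = real N powr z * real N powr a" using N unfolding z_def
        by (simp add: powr_add[symmetric])
      then show ?thesis using N by (simp add: field_simps)
    qed
    finally show "hh a N \<le> K * real N powr a" .
  qed
qed

lemma rec_bound:
  fixes Y :: "nat \<Rightarrow> real"
  assumes b: "\<beta> > 0" and N0: "N0 \<ge> 1" and K: "K \<ge> 0"
    and rec: "\<And>N. N \<ge> N0 \<Longrightarrow> \<bar>Y (Suc N) - (1 + 2 / Zc \<beta> N) * Y N\<bar> \<le> K / real N"
  shows "\<exists>A. \<forall>N\<ge>N0. \<bar>Y N\<bar> \<le> A * hh (2 / (2 + \<beta>)) N"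
proof -
  define a where "a = 2 / (2 + \<beta>)"
  have a0: "a > 0" and a1: "a < 1" unfolding a_def using b by auto
  define B where "B = K / a"
  have B0: "B \<ge> 0" unfolding B_def using K a0 by simp
  define A where "A = (\<bar>Y N0\<bar> + B) / hh a N0"
  have hp: "hh a N > 0" for N using hh_pos[OF a1] .
  have main: "\<bar>Y N\<bar> \<le> A * hh a N - B" if "N \<ge> N0" for N
    using that
  proof (induction N rule: dec_induct)
    case base
    then show ?case unfolding A_def using hp[of N0] by simp
  next
    case (step n)
    have n1: "n \<ge> 1" using step N0 by simp
    have Z: "Zc \<beta> n > 0" using Zc_pos[OF b n1] .
    have c0: "1 + 2 / Zc \<beta> n \<ge> 0" using Z by simp
    have "\<bar>Y (Suc n)\<bar> \<le> (1 + 2 / Zc \<beta> n) * \<bar>Y n\<bar> + K / real n"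
    proof -
      have e: "\<bar>(1 + 2 / Zc \<beta> n) * Y n\<bar> = (1 + 2 / Zc \<beta> n) * \<bar>Y n\<bar>" using c0 by (simp add: abs_mult)
      have "\<bar>Y (Suc n)\<bar> \<le> \<bar>Y (Suc n) - (1 + 2 / Zc \<beta> n) * Y n\<bar> + \<bar>(1 + 2 / Zc \<beta> n) * Y n\<bar>"
        by (rule order.trans[OF _ abs_triangle_ineq]) simp
      then show ?thesis using rec[OF step(1)] e by linarith
    qed
    also have "\<dots> \<le> (1 + 2 / Zc \<beta> n) * (A * hh a n - B) + K / real n"
      using step(3) c0 by (simp add: mult_left_mono)
    also have "\<dots> = A * hh a (Suc n) - B - (2 * B / Zc \<beta> n - K / real n)"
      unfolding a_def hh_Suc[OF b n1] by (simp add: algebra_simps)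
    also have "\<dots> \<le> A * hh a (Suc n) - B"
    proof -
      have "a * Zc \<beta> n \<le> 2 * real n" unfolding a_def Zc_def using b by (simp add: field_simps)
      then have "K * (a * Zc \<beta> n) \<le> K * (2 * real n)" using K by (rule mult_left_mono)
      then have "K / real n \<le> 2 * B / Zc \<beta> n" unfolding B_def using Z a0 n1
        by (simp add: field_simps)
      then show ?thesis by simp
    qed
    finally show ?case .
  qed
  show ?thesis unfolding a_def[symmetric]
  proof (intro exI[of _ A] allI impI)
    fix N assume "N \<ge> N0"
    then show "\<bar>Y N\<bar> \<le> A * hh a N" using main[of N] B0 by linarith
  qed
qed




lemma eta_alg:
 fixes X X1 J r Z \<alpha> \<beta> m N :: real
 assumes Zd: "Z = (2+\<beta>)*N - 2" and Z0: "Z \<noteq> 0" and al: "\<alpha> * \<beta> = (2+\<beta>)*(m+1) + 4*\<beta>*m"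
 and X1: "X1 = X*(1+2/Z) + 2*(r+J) + 2 + (2/Z)*(2*\<beta>*m*(N-1) + \<beta>*r + (1-\<beta>*(m-r))*(r+J))"
 shows "(X1 - \<alpha>*(N+1) - ((r+1)^2 - m*(r+1))) - (1+2/Z)*(X - \<alpha>*N - (r^2 - m*r)) = J*(2 + 2*(1-\<beta>*(m-r))/Z) + (2*\<alpha> - 2*m - 2 - 4*\<beta>*m + 2*(\<beta>*r + (1-\<beta>*(m-r))*r + (r^2 - m*r)))/Z"
proof -
  have key: "((m+1) - \<alpha>) * Z + 4*\<beta>*m*(N-1) + 2*\<alpha>*N = 2*\<alpha> - 2*m - 2 - 4*\<beta>*m"
  proof -
    have "((m+1) - \<alpha>) * Z + 4*\<beta>*m*(N-1) + 2*\<alpha>*N = N * ((2+\<beta>)*(m+1) + 4*\<beta>*m - \<alpha> * \<beta>) + 2*\<alpha> - 2*m - 2 - 4*\<beta>*m"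
      unfolding Zd by (simp add: algebra_simps)
    then show ?thesis using al by simp
  qed
  have "(X1 - \<alpha>*(N+1) - ((r+1)^2 - m*(r+1))) - (1+2/Z)*(X - \<alpha>*N - (r^2 - m*r))
      = J*(2 + 2*(1-\<beta>*(m-r))/Z) + (((m+1) - \<alpha>) * Z + 4*\<beta>*m*(N-1) + 2*\<alpha>*N + 2*(\<beta>*r + (1-\<beta>*(m-r))*r + (r^2 - m*r)))/Z"
    unfolding X1 using Z0 by (simp add: field_simps power2_eq_square)
  then show ?thesis unfolding key .
qed

definition pp :: "nat \<Rightarrow> real \<Rightarrow> real" where "pp m x = x^2 - real m * x"

lemma pp_Suc: "m > 0 \<Longrightarrow> pp m (real (Suc N mod m)) = (real (N mod m) + 1)^2 - real m * (real (N mod m) + 1)"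
proof (cases "Suc (N mod m) = m")
  case True
  then have "Suc N mod m = 0" by (simp add: mod_Suc)
  moreover have "real (N mod m) + 1 = real m" using True by (metis of_nat_Suc add.commute)
  ultimately show ?thesis unfolding pp_def by (simp add: power2_eq_square)
next
  case False
  then have "Suc N mod m = Suc (N mod m)" by (simp add: mod_Suc)
  then show ?thesis unfolding pp_def by (simp add: add.commute)
qed

lemma lin_bound:
  fixes u v w q s r m \<alpha> bm bmm mm :: real
  assumes "0 \<le> u" "u \<le> bm" "v = r - q" "0 \<le> q" "q \<le> bmm" "w = - s" "0 \<le> s" "s \<le> mm"
    "0 \<le> r" "r \<le> m" "\<alpha> \<ge> 0" "bm \<ge> 0" "bmm \<ge> 0" "mm \<ge> 0"
  shows "\<bar>2*\<alpha> - 2*m - 2 - 4*bm + 2*(u + v + w)\<bar> \<le> 2*\<alpha> + 2*m + 2 + 4*bm + 2*(bm + m + bmm + mm)"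
  using assms by (simp add: abs_le_iff)

lemma C_bound:
  fixes \<beta> \<alpha> r m :: real
  assumes b: "\<beta> > 0" and r: "0 \<le> r" "r \<le> m" and al: "\<alpha> \<ge> 0"
  shows "\<bar>2*\<alpha> - 2*m - 2 - 4*\<beta>*m + 2*(\<beta>*r + (1-\<beta>*(m-r))*r + (r^2 - m*r))\<bar>
     \<le> 2*\<alpha> + 2*m + 2 + 4*\<beta>*m + 2*(\<beta>*m + m + \<beta>*m*m + m*m)"
proof -
  have m0: "m \<ge> 0" using r by simp
  have f1: "0 \<le> \<beta>*r" "\<beta>*r \<le> \<beta>*m" using b r by (auto intro: mult_left_mono)
  have mr: "0 \<le> m - r" "m - r \<le> m" using r by auto
  have g: "0 \<le> (m - r) * r" "(m - r) * r \<le> m * m" using mr r m0 by (auto intro: mult_mono)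
  have f2: "(1-\<beta>*(m-r))*r = r - \<beta> * ((m - r) * r)" by (simp add: algebra_simps)
  have f3: "0 \<le> \<beta> * ((m - r) * r)" "\<beta> * ((m - r) * r) \<le> \<beta> * m * m" using g b by (auto intro: mult_left_mono)
  have f4: "r^2 - m*r = - ((m - r) * r)" by (simp add: algebra_simps power2_eq_square)
  have "\<bar>2*\<alpha> - 2*m - 2 - 4*(\<beta>*m) + 2*(\<beta>*r + (1-\<beta>*(m-r))*r + (r^2 - m*r))\<bar>
     \<le> 2*\<alpha> + 2*m + 2 + 4*(\<beta>*m) + 2*(\<beta>*m + m + \<beta>*m*m + m*m)"
    by (rule lin_bound[OF f1 f2 f3 f4 g r al]) (use b m0 in auto)
  then show ?thesis by (simp add: mult.assoc)
qed


lemma abs_add2_le: "\<bar>t\<bar> \<le> c \<Longrightarrow> \<bar>2 + t\<bar> \<le> 2 + (c::real)"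
  by (simp add: abs_le_iff) 

lemma Y_rec:
  assumes b: "\<beta> > 0" and m: "m > 0" and N: "N \<ge> 2 * m" "N \<ge> 2"
  defines "\<alpha> \<equiv> ((2 + \<beta>) * (real m + 1) + 4 * \<beta> * real m) / \<beta>"
  defines "X \<equiv> \<lambda>N. measure_pmf.expectation (tree_process \<beta> N) (QQ m)"
  defines "Y \<equiv> \<lambda>N. X N - \<alpha> * real N - pp m (real (N mod m))"
  shows "\<bar>Y (Suc N) - (1 + 2 / Zc \<beta> N) * Y N\<bar> \<le>
     ((2*\<alpha> + 2*real m + 2 + 4*\<beta>*real m + 2*(\<beta>*real m + real m + \<beta>*real m*real m + real m*real m))
       + (4 + 2 * \<beta> * real m) * ((\<beta> + 2) * real m ^ 2)) / real N"
proof -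
  define r where "r = real (N mod m)"
  define Z where "Z = Zc \<beta> N"
  define J where "J = measure_pmf.expectation (tree_process \<beta> N) (II m)"
  have N1: "N \<ge> 1" "N \<ge> m" using N m by auto
  have Z0: "Z > 0" unfolding Z_def using Zc_pos[OF b N1(1)] .
  have ZN: "Z \<ge> real N"
  proof -
    have "real N \<ge> 2" using N by simp
    moreover have "\<beta> * real N \<ge> 0" using b by simp
    ultimately show ?thesis unfolding Z_def Zc_def by (simp add: algebra_simps)
  qed
  have Nr: "real N > 0" using N by simp
  have r0: "0 \<le> r" "r \<le> real m" unfolding r_def using m by (auto intro: less_imp_le)
  have J0: "0 \<le> J" and J1: "J \<le> (\<beta> + 2) * real m ^ 2 / real N"
    unfolding J_def using J_bound[OF b m N] by auto
  have al: "\<alpha> * \<beta> = (2+\<beta>)*(real m+1) + 4*\<beta>*real m" unfolding \<alpha>_def using b by simp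
  have al0: "\<alpha> \<ge> 0" unfolding \<alpha>_def using b by simp
  have Xr: "X (Suc N) = X N * (1 + 2 / Z) + 2 * (r + J) + 2
          + (2 / Z) * (2 * \<beta> * real m * (real N - 1) + \<beta> * r + (1 - \<beta> * (real m - r)) * (r + J))"
    unfolding X_def Z_def r_def J_def by (rule X_rec[OF b m N1])
  have Zd: "Z = (2 + \<beta>) * real N - 2" unfolding Z_def Zc_def ..
  have eta: "Y (Suc N) - (1 + 2 / Z) * Y N = J*(2 + 2*(1-\<beta>*(real m-r))/Z) + (2*\<alpha> - 2*real m - 2 - 4*\<beta>*real m + 2*(\<beta>*r + (1-\<beta>*(real m-r))*r + (r^2 - real m*r)))/Z"
  proof -
    have "Y (Suc N) = X (Suc N) - \<alpha> * (real N + 1) - ((r+1)^2 - real m*(r+1))"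
      unfolding Y_def pp_Suc[OF m] r_def by simp
    moreover have "Y N = X N - \<alpha> * real N - (r^2 - real m*r)" unfolding Y_def pp_def r_def by simp
    ultimately show ?thesis using eta_alg[OF Zd _ al Xr] Z0 by simp
  qed
  have t1: "\<bar>J*(2 + 2*(1-\<beta>*(real m-r))/Z)\<bar> \<le> (4 + 2 * \<beta> * real m) * ((\<beta> + 2) * real m ^ 2) / real N"
  proof -
    have c1: "\<bar>1-\<beta>*(real m-r)\<bar> \<le> 1 + \<beta> * real m"
    proof -
      have "0 \<le> \<beta>*(real m-r)" "\<beta>*(real m-r) \<le> \<beta> * real m" using b r0 by (auto intro: mult_left_mono)
      then show ?thesis by (simp add: abs_le_iff)
    qed
    have Z1: "Z \<ge> 1" using ZN N by simp
    have "\<bar>2*(1-\<beta>*(real m-r))/Z\<bar> \<le> 2*(1 + \<beta> * real m)"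
    proof -
      have "\<bar>2*(1-\<beta>*(real m-r))/Z\<bar> = 2*\<bar>1-\<beta>*(real m-r)\<bar>/Z" unfolding abs_divide abs_mult using Z0 by simp
      also have "\<dots> \<le> 2*\<bar>1-\<beta>*(real m-r)\<bar>" using Z1 Z0 by (simp add: divide_le_eq) (metis abs_ge_zero mult.right_neutral mult_left_mono)
      also have "\<dots> \<le> 2*(1 + \<beta> * real m)" using c1 by simp
      finally show ?thesis .
    qed
    then have "\<bar>2 + 2*(1-\<beta>*(real m-r))/Z\<bar> \<le> 2 + 2*(1 + \<beta> * real m)" by (rule abs_add2_le)
    then have "\<bar>2 + 2*(1-\<beta>*(real m-r))/Z\<bar> \<le> 4 + 2 * \<beta> * real m" by simp
    then have "\<bar>J*(2 + 2*(1-\<beta>*(real m-r))/Z)\<bar> \<le> J * (4 + 2 * \<beta> * real m)"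
      using J0 by (simp add: abs_mult mult_left_mono)
    also have "\<dots> \<le> (\<beta> + 2) * real m ^ 2 / real N * (4 + 2 * \<beta> * real m)"
      using J1 b by (intro mult_right_mono) auto
    finally show ?thesis by (simp add: field_simps)
  qed
  define Cc where "Cc = 2*\<alpha> + 2*real m + 2 + 4*\<beta>*real m + 2*(\<beta>*real m + real m + \<beta>*real m*real m + real m*real m)"
  have t2: "\<bar>(2*\<alpha> - 2*real m - 2 - 4*\<beta>*real m + 2*(\<beta>*r + (1-\<beta>*(real m-r))*r + (r^2 - real m*r)))/Z\<bar> \<le> Cc / real N"
  proof -
    have c: "\<bar>2*\<alpha> - 2*real m - 2 - 4*\<beta>*real m + 2*(\<beta>*r + (1-\<beta>*(real m-r))*r + (r^2 - real m*r))\<bar> \<le> Cc"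
      unfolding Cc_def by (rule C_bound[OF b r0 al0])
    have Cc0: "Cc \<ge> 0" using c by linarith
    have "\<bar>(2*\<alpha> - 2*real m - 2 - 4*\<beta>*real m + 2*(\<beta>*r + (1-\<beta>*(real m-r))*r + (r^2 - real m*r)))/Z\<bar> \<le> Cc / Z"
      using c Z0 by (simp add: divide_right_mono)
    also have "\<dots> \<le> Cc / real N" using Cc0 ZN Nr by (intro divide_left_mono) auto
    finally show ?thesis .
  qed
  have "\<bar>Y (Suc N) - (1 + 2 / Zc \<beta> N) * Y N\<bar> \<le> (4 + 2 * \<beta> * real m) * ((\<beta> + 2) * real m ^ 2) / real N + Cc / real N"
    unfolding Z_def[symmetric] eta by (rule order.trans[OF abs_triangle_ineq add_mono[OF t1 t2]])
  then show ?thesis unfolding Cc_def by (simp add: add_divide_distrib)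
qed




lemma block_le:
  assumes m: "m > 0" and x: "1 \<le> x" "x \<le> n * m"
  shows "block m x \<le> n"
proof -
  have "x - 1 < n * m" using x by simp
  then have "(x - 1) div m < n" by (rule less_mult_imp_div_less)
  then show ?thesis unfolding block_def by simp
qed

lemma merged_DD:
  "real (merged_degree m hs j) = DD m hs j"
proof -
  have a: "real (card {k \<in> {2..length hs + 1}. block m k = j}) = (\<Sum>y\<leftarrow>[2..<length hs + 2]. of_bool (block m y = j))"
  proof -
    have "(\<Sum>y\<leftarrow>[2..<length hs + 2]. of_bool (block m y = j) :: real) = (\<Sum>k\<in>{2..length hs + 1}. of_bool (block m k = j))"
      unfolding interv_sum_list_conv_sum_set_nat set_upt by (rule sum.cong) auto
    moreover have "(\<Sum>k\<in>{2..length hs + 1}. of_bool (block m k = j) :: real) = real (card {k\<in>{2..length hs + 1}. block m k = j})"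
      by (rule sum_of_bool_card) simp
    ultimately show ?thesis by linarith
  qed
  have b: "real (card {k \<in> {2..length hs + 1}. block m (hs ! (k - 2)) = j}) = (\<Sum>x\<leftarrow>hs. of_bool (block m x = j))"
  proof -
    have "(\<Sum>x\<leftarrow>hs. of_bool (block m x = j) :: real) = (\<Sum>k\<in>{2..length hs + 1}. of_bool (block m (hs ! (k - 2)) = j))"
      by (rule sum_hs_shift[symmetric])
    moreover have "(\<Sum>k\<in>{2..length hs + 1}. of_bool (block m (hs ! (k - 2)) = j) :: real) = real (card {k\<in>{2..length hs + 1}. block m (hs ! (k - 2)) = j})"
      by (rule sum_of_bool_card) simp
    ultimately show ?thesis by linarith
  qed
  show ?thesis unfolding merged_degree_def DD_def ends_def using a b by simp
qed

lemma cherries_QQ: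
  assumes m: "m > 0" and n: "n \<ge> 1" and l: "length hs = n * m - 1" and w: "wfh hs"
  shows "cherries m n hs = (QQ m hs - 2 * (real (n * m) - 1)) / 2"
proof -
  have nm: "n * m \<ge> 1" using m n by simp
  have rng: "block m x \<in> {1..n}" if "x \<in> set (ends hs)" for x
    using ends_range[OF w that] l nm block_le[OF m] block_ge1 by auto
  have QQs: "QQ m hs = (\<Sum>j=1..n. DD m hs j ^ 2)"
  proof -
    have "QQ m hs = (\<Sum>x\<leftarrow>ends hs. \<Sum>j=1..n. of_bool (block m x = j) * DD m hs j)"
      unfolding QQ_def
    proof (rule sum_list_cong_set)
      fix x assume "x \<in> set (ends hs)"
      then have "block m x \<in> {1..n}" by (rule rng)
      moreover have "(\<Sum>j=1..n. of_bool (block m x = j) * DD m hs j) = (\<Sum>j=1..n. if block m x = j then DD m hs j else 0)"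
        by (rule sum.cong) auto
      ultimately show "DD m hs (block m x) = (\<Sum>j=1..n. of_bool (block m x = j) * DD m hs j)"
        by (simp add: sum.delta)
    qed
    also have "\<dots> = (\<Sum>j=1..n. (\<Sum>x\<leftarrow>ends hs. of_bool (block m x = j)) * DD m hs j)"
      unfolding sum_list_sum_swap by (simp add: sum_list_mult_const)
    also have "\<dots> = (\<Sum>j=1..n. DD m hs j ^ 2)"
      unfolding DD_def[symmetric] by (simp add: power2_eq_square)
    finally show ?thesis .
  qed
  have Ds: "(\<Sum>j=1..n. DD m hs j) = 2 * (real (n * m) - 1)"
  proof -
    have "(\<Sum>j=1..n. DD m hs j) = (\<Sum>x\<leftarrow>ends hs. \<Sum>j=1..n. of_bool (block m x = j))"
      unfolding DD_def sum_list_sum_swap ..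
    also have "\<dots> = (\<Sum>x\<leftarrow>ends hs. 1)"
    proof (rule sum_list_cong_set)
      fix x assume "x \<in> set (ends hs)"
      then have "block m x \<in> {1..n}" by (rule rng)
      moreover have "(\<Sum>j=1..n. of_bool (block m x = j) :: real) = (\<Sum>j=1..n. if block m x = j then 1 else 0)"
        by (rule sum.cong) auto
      ultimately show "(\<Sum>j=1..n. of_bool (block m x = j)) = (1::real)"
        by (simp add: sum.delta)
    qed
    also have "\<dots> = 2 * (real (n * m) - 1)" using l nm by (simp add: length_ends sum_list_triv of_nat_diff)
    finally show ?thesis .
  qed
  have "cherries m n hs = (\<Sum>j=1..n. real (merged_degree m hs j choose 2))"
    unfolding cherries_def by simp
  also have "\<dots> = (\<Sum>j=1..n. (DD m hs j ^ 2 - DD m hs j) / 2)"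
  proof (rule sum.cong[OF refl])
    fix j
    have "real (merged_degree m hs j choose 2) = real (merged_degree m hs j) * (real (merged_degree m hs j) - 1) / 2"
      by (cases "merged_degree m hs j") (simp_all add: choose_two real_of_nat_div field_simps)
    then show "real (merged_degree m hs j choose 2) = (DD m hs j ^ 2 - DD m hs j) / 2"
      unfolding merged_DD by (simp add: power2_eq_square algebra_simps)
  qed
  also have "\<dots> = ((\<Sum>j=1..n. DD m hs j ^ 2) - (\<Sum>j=1..n. DD m hs j)) / 2"
    by (simp only: sum_divide_distrib[symmetric] sum_subtractf)
  finally show ?thesis unfolding QQs Ds .
qed


theorem proposition4:
  fixes \<beta> :: real and m :: nat
  assumes "\<beta> > 0" and "m > 0"
  shows "(\<lambda>n::nat. measure_pmf.expectation (tree_process \<beta> (n * m)) (cherries m n)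
            - ((2 + 5 * \<beta>) / (2 * \<beta>) * real m ^ 2 + (2 - \<beta>) / (2 * \<beta>) * real m) * real n)
         \<in> O(\<lambda>n. real n powr (2 / (2 + \<beta>)))"
proof -
  note b = assms(1) and m = assms(2)
  define a where "a = 2 / (2 + \<beta>)"
  have a0: "a > 0" and a1: "a < 1" unfolding a_def using b by auto
  define \<alpha> where "\<alpha> = ((2 + \<beta>) * (real m + 1) + 4 * \<beta> * real m) / \<beta>"
  define X where "X = (\<lambda>N. measure_pmf.expectation (tree_process \<beta> N) (QQ m))"
  define Y where "Y = (\<lambda>N. X N - \<alpha> * real N - pp m (real (N mod m)))"
  define Kc where "Kc = ((2*\<alpha> + 2*real m + 2 + 4*\<beta>*real m + 2*(\<beta>*real m + real m + \<beta>*real m*real m + real m*real m))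
       + (4 + 2 * \<beta> * real m) * ((\<beta> + 2) * real m ^ 2))"
  define N0 where "N0 = 2 * m + 2"
  have N01: "N0 \<ge> 1" unfolding N0_def by simp
  have rec: "\<bar>Y (Suc N) - (1 + 2 / Zc \<beta> N) * Y N\<bar> \<le> Kc / real N" if "N \<ge> N0" for N
  proof -
    have "N \<ge> 2 * m" "N \<ge> 2" using that unfolding N0_def by auto
    then show ?thesis unfolding Y_def X_def Kc_def \<alpha>_def by (rule Y_rec[OF b m])
  qed
  have Kc0: "Kc \<ge> 0"
  proof -
    have "0 \<le> Kc / real N0" using rec[of N0] by (meson abs_ge_zero order.trans order_refl)
    then show ?thesis using N01 by (simp add: zero_le_divide_iff)
  qed
  obtain A where A: "\<And>N. N \<ge> N0 \<Longrightarrow> \<bar>Y N\<bar> \<le> A * hh a N"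
    using rec_bound[OF b N01 Kc0 rec] unfolding a_def by blast
  obtain C where C: "\<And>N. N \<ge> 1 \<Longrightarrow> hh a N \<le> C * real N powr a"
    using hh_bound[OF a0 a1] by blast
  have A0: "A \<ge> 0"
  proof (rule ccontr)
    assume "\<not> A \<ge> 0"
    then have "A * hh a N0 < 0" using hh_pos[OF a1, of N0] by (simp add: mult_neg_pos)
    then show False using A[of N0] by simp
  qed
  have Yb: "\<bar>Y N\<bar> \<le> A * C * real N powr a" if "N \<ge> N0" for N
  proof -
    have "\<bar>Y N\<bar> \<le> A * hh a N" using A that by simp
    also have "\<dots> \<le> A * (C * real N powr a)" using C[of N] that N01 A0 by (intro mult_left_mono) auto
    finally show ?thesis by simp
  qed
  define c where "c = (2 + 5 * \<beta>) / (2 * \<beta>) * real m ^ 2 + (2 - \<beta>) / (2 * \<beta>) * real m"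
  have cid: "(\<alpha> - 2) * real m / 2 = c"
    unfolding \<alpha>_def c_def using b by (simp add: field_simps power2_eq_square)
  define K where "K = 1 + A * C * real m powr a / 2"
  show ?thesis unfolding c_def[symmetric] a_def[symmetric]
  proof (rule bigoI[where c = K])
    show "\<forall>\<^sub>F n in at_top. norm (measure_pmf.expectation (tree_process \<beta> (n * m)) (cherries m n) - c * real n) \<le> K * norm (real n powr a)"
      unfolding eventually_at_top_linorder
    proof (intro exI[of _ N0] allI impI)
      fix n assume n: "n \<ge> N0"
      have n1: "n \<ge> 1" using n N01 by simp
      have "n * m \<ge> n" using m by simp
      then have nm: "n * m \<ge> N0" using n by linarith
      have nm1: "n * m \<ge> 1" using n1 m by simp
      have E: "measure_pmf.expectation (tree_process \<beta> (n * m)) (cherries m n) = (X (n * m) - 2 * (real (n * m) - 1)) / 2"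
      proof -
        have "measure_pmf.expectation (tree_process \<beta> (n * m)) (cherries m n) =
           measure_pmf.expectation (tree_process \<beta> (n * m)) (\<lambda>hs. QQ m hs * (1/2) + QQ m hs * 0 + (- (real (n * m) - 1)))"
        proof (rule E_cong)
          fix hs assume "hs \<in> set_pmf (tree_process \<beta> (n * m))"
          then have l: "length hs = n * m - 1" and w: "wfh hs" using tp_set[OF b nm1] by auto
          have eq: "cherries m n hs = (QQ m hs - 2 * (real (n * m) - 1)) / 2" by (rule cherries_QQ[OF m n1 l w])
          show "cherries m n hs = QQ m hs * (1/2) + QQ m hs * 0 + (- (real (n * m) - 1))"
            unfolding eq by (simp add: field_simps)
        qed
        also have "\<dots> = X (n * m) * (1/2) + X (n * m) * 0 + (- (real (n * m) - 1))"
          unfolding X_def by (rule E_lin[OF tp_fin[OF b nm1]])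
        finally show ?thesis by simp
      qed
      have YX: "Y (n * m) = X (n * m) - \<alpha> * real (n * m)" unfolding Y_def pp_def by simp
      have f: "measure_pmf.expectation (tree_process \<beta> (n * m)) (cherries m n) - c * real n = (Y (n * m) + 2) / 2"
        unfolding E YX cid[symmetric] by (simp add: field_simps)
      have pw: "real (n * m) powr a = real n powr a * real m powr a" by (simp add: powr_mult)
      have pn: "real n powr a \<ge> 1" using n1 a0 by (simp add: ge_one_powr_ge_zero)
      have "\<bar>(Y (n * m) + 2) / 2\<bar> \<le> 1 + \<bar>Y (n * m)\<bar> / 2" by simp
      also have "\<dots> \<le> 1 + A * C * real (n * m) powr a / 2" using Yb[OF nm] by simp
      also have "\<dots> = 1 + A * C * real m powr a / 2 * real n powr a" unfolding pw by simp
      also have "\<dots> \<le> K * real n powr a" unfolding K_def using pn by (simp add: algebra_simps)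
      finally show "norm (measure_pmf.expectation (tree_process \<beta> (n * m)) (cherries m n) - c * real n) \<le> K * norm (real n powr a)"
        unfolding f by simp
    qed
  qed
qed


end
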